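(* In the FIND setting of the context, let $\mathcal C_r$ and $\mathcal C_s$ be leaf clusters of $\mathcal T$, choose consistent orderings of $\mathcal T_r^+$ and $\mathcal T_s^+$, and let $\boldsymbol\Sigma_{r,g}$, $\boldsymbol\Sigma_{s,g}$ denote the matrices produced by the elimination process for target $r$ and target $s$ respectively. Then for every cluster $\mathcal C_i$ that is a node of both $\mathcal T_r^+$ and $\mathcal T_s^+$, $$\boldsymbol\Sigma_{r,i}(\mathcal S_i\cup\mathcal B_i,\mathcal S_i\cup\mathcal B_i)=\boldsymbol\Sigma_{s,i}(\mathcal S_i\cup\mathcal B_i,\mathcal S_i\cup\mathcal B_i).$$
   Context: Setting (FIND). $\mathcal M$ is a finite set of mesh nodes; $\mathbf A$ is an invertible complex matrix indexed by $\mathcal M\times\mathcal M$, structurally symmetric ($A_{ij}\neq0\iff A_{ji}\neq0$); distinct nodes $i,j$ are connected if $A_{ij}\neq 0$. $\boldsymbol\Sigma$ is a complex matrix indexed by $\mathcal M\times\mathcal M$ with $\Sigma_{ij}=0$ whenever $i\neq j$ and $i,j$ are not connected. Matrices are indexed by $\mathcal M$ itself (the ordering only determines the sequence of eliminations). $\dagger$ is conjugate transpose, $\mathbf X^{-\dagger}=(\mathbf X^{-1})^\dagger$. $\mathbf X(X,Y)$ is the submatrix with rows in $X$, columns in $Y$. For a cluster $\mathcal C\subseteq\mathcal M$: boundary set $\mathcal B_{\mathcal C}=\{i\in\mathcal C: A_{ij}\neq 0\text{ for some } j\notin\mathcal C\}$, inner set $\mathcal I_{\mathcal C}=\mathcal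 C\setminus\mathcal B_{\mathcal C}$; for $\mathcal C_g$ write $\mathcal B_g,\mathcal I_g$. Cluster tree: $\mathcal T$ is a rooted binary tree of clusters with root $\mathcal M$, each non-leaf cluster the disjoint union of its two children. For a leaf $\mathcal C_r$ with path $r=a_0,\dots,a_d$ (root) and $b_k$ the sibling of $a_k$, the augmented tree $\mathcal T_r^+$ has root $\mathcal C_{-r}=\mathcal M\setminus\mathcal C_r$; for $0\le k\le d-2$, $\mathcal C_{-a_k}=\mathcal M\setminus\mathcal C_{a_k}$ has children $\mathcal C_{b_k}$ and $\mathcal C_{-a_{k+1}}$, with $\mathcal C_{-a_{d-1}}$ identified with $\mathcal C_{b_{d-1}}$; each basic cluster $\mathcal C_{b_k}$ carries its subtree from $\mathcal T$. (A node's subtree is determined by the node, so a cluster common to two augmented trees has the same subtree in both.) Private inner nodes: $\mathcal S_g=\mathcal I_g$ for a leaf $g$ of an augmented tree; $\mathcal S_g=\mathcal I_g\setminus(\mathcal I_i\cup\mathcal I_j)$ if $g$ has children $i,j$. Consistent ordering: a total order $g_1,\dots,g_m$ of the nodes of $\mathcal T_r^+$ with every node after all its descendants. Elimination for target $r$: $\mathbf A_{r,g_1}=\mathbf A$, $\boldsymbol\Sigma_{r,g_1}=\boldsymbol\Sigma$; for each $g$ (with $\mathbf A_{r,g}(\mathcal S_g,\mathcal S_g)$ invertible), $\mathcal L_g=\mathbf A_{r,g}(\mathcal B_g,\mathcal S_g)\mathbf A_{r,g}(\mathcal S_g,\mathcal S_g)^{-1}$, $\mathbf L_g$ is the identity on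 $\mathcal M$ except $\mathbf L_g(\mathcal B_g,\mathcal S_g)=\mathcal L_g$, $\mathbf A_{r,g+}=\mathbf L_g^{-1}\mathbf A_{r,g}$, $\boldsymbol\Sigma_{r,g+}=\mathbf L_g^{-1}\boldsymbol\Sigma_{r,g}\mathbf L_g^{-\dagger}$, and $\mathbf A_{r,g_{t+1}}=\mathbf A_{r,g_t+}$, $\boldsymbol\Sigma_{r,g_{t+1}}=\boldsymbol\Sigma_{r,g_t+}$. Thus $\boldsymbol\Sigma_{r,i}$ is the matrix just before eliminating $\mathcal S_i$. *)

theory Defs
  imports "HOL-Analysis.Analysis"
begin

text \<open>Mesh nodes: the finite type 'n (so the mesh M is UNIV :: 'n set).
  Matrices indexed by M x M: complex ^ 'n ^ 'n.\<close>

definition ctrans :: "complex ^'n ^'n \<Rightarrow> complex ^'n ^'n" where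
  "ctrans X = (\<chi> i j. cnj (X $ j $ i))"

definition struct_sym :: "complex ^'n ^'n \<Rightarrow> bool" where
  "struct_sym A \<longleftrightarrow> (\<forall>i j. A $ i $ j \<noteq> 0 \<longleftrightarrow> A $ j $ i \<noteq> 0)"

definition connected_nodes :: "complex ^'n ^'n \<Rightarrow> 'n \<Rightarrow> 'n \<Rightarrow> bool" where
  "connected_nodes A i j \<longleftrightarrow> i \<noteq> j \<and> A $ i $ j \<noteq> 0"

definition sigma_pattern :: "complex ^'n ^'n \<Rightarrow> complex ^'n ^'n \<Rightarrow> bool" where
  "sigma_pattern A S \<longleftrightarrow> (\<forall>i j. i \<noteq> j \<and> \<not> connected_nodes A i j \<longrightarrow> S $ i $ j = 0)"

definition bnd :: "complex ^'n ^'n \<Rightarrow> 'n set \<Rightarrow> 'n set" where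
  "bnd A C = {i \<in> C. \<exists>j. j \<notin> C \<and> A $ i $ j \<noteq> 0}"

definition inner :: "complex ^'n ^'n \<Rightarrow> 'n set \<Rightarrow> 'n set" where
  "inner A C = C - bnd A C"

datatype 'a ctree = Leaf "'a set" | Node "'a set" "'a ctree" "'a ctree"

fun cl :: "'a ctree \<Rightarrow> 'a set" where
  "cl (Leaf c) = c"
| "cl (Node c _ _) = c"

fun subtrees :: "'a ctree \<Rightarrow> 'a ctree set" where
  "subtrees (Leaf c) = {Leaf c}"
| "subtrees (Node c l r) = insert (Node c l r) (subtrees l \<union> subtrees r)"

fun proper_subtrees :: "'a ctree \<Rightarrow> 'a ctree set" where
  "proper_subtrees (Leaf c) = {}"
| "proper_subtrees (Node c l r) = subtrees l \<union> subtrees r"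

definition clusters :: "'a ctree \<Rightarrow> 'a set set" where
  "clusters t = cl ` subtrees t"

fun wf_ctree :: "'a ctree \<Rightarrow> bool" where
  "wf_ctree (Leaf c) \<longleftrightarrow> c \<noteq> {}"
| "wf_ctree (Node c l r) \<longleftrightarrow> wf_ctree l \<and> wf_ctree r \<and> c = cl l \<union> cl r \<and> cl l \<inter> cl r = {}"

definition cluster_tree :: "'a ctree \<Rightarrow> bool" where
  "cluster_tree T \<longleftrightarrow> wf_ctree T \<and> cl T = UNIV"

text \<open>Augmented tree for target leaf cluster R.
  aug_go R acc t: t is the subtree at a_(k+1) (containing R), acc is the augmented
  subtree rooted at C_(-a_(k+1)).  The new node C_(-a_k) has children C_(b_k) and C_(-a_(k+1)).\<close>
fun aug_go :: "'a set \<Rightarrow> 'a ctree \<Rightarrow> 'a ctree \<Rightarrow> 'a ctree" where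
  "aug_go R acc (Leaf c) = acc"
| "aug_go R acc (Node c l r) =
     (if R \<subseteq> cl l then aug_go R (Node (cl r \<union> cl acc) r acc) l
      else aug_go R (Node (cl l \<union> cl acc) l acc) r)"

text \<open>At the root a_d = M, C_(-a_(d-1)) is identified with C_(b_(d-1)).\<close>
fun aug_tree :: "'a set \<Rightarrow> 'a ctree \<Rightarrow> 'a ctree" where
  "aug_tree R (Leaf c) = Leaf {}"
| "aug_tree R (Node c l r) = (if R \<subseteq> cl l then aug_go R r l else aug_go R l r)"

fun priv_of :: "complex ^'n ^'n \<Rightarrow> 'n ctree \<Rightarrow> 'n set" where
  "priv_of A (Leaf c) = inner A c"
| "priv_of A (Node c l r) = inner A c - (inner A (cl l) \<union> inner A (cl r))"

definition priv :: "complex ^'n ^'n \<Rightarrow> 'n ctree \<Rightarrow> 'n set \<Rightarrow> 'n set" where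
  "priv A t g = priv_of A (THE u. u \<in> subtrees t \<and> cl u = g)"

definition consistent_ordering :: "'a ctree \<Rightarrow> 'a set list \<Rightarrow> bool" where
  "consistent_ordering t ord \<longleftrightarrow> distinct ord \<and> set ord = clusters t \<and>
     (\<forall>u \<in> subtrees t. \<forall>v \<in> proper_subtrees u. \<forall>p q.
        p < length ord \<and> q < length ord \<and> ord ! p = cl v \<and> ord ! q = cl u \<longrightarrow> p < q)"

definition is_subinv :: "complex ^'n ^'n \<Rightarrow> 'n set \<Rightarrow> ('n \<Rightarrow> 'n \<Rightarrow> complex) \<Rightarrow> bool" where
  "is_subinv X S Y \<longleftrightarrow>
     (\<forall>i\<in>S. \<forall>j\<in>S. (\<Sum>k\<in>S. X $ i $ k * Y k j) = (if i = j then 1 else 0)) \<and>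
     (\<forall>i\<in>S. \<forall>j\<in>S. (\<Sum>k\<in>S. Y i k * X $ k $ j) = (if i = j then 1 else 0))"

definition sub_invertible :: "complex ^'n ^'n \<Rightarrow> 'n set \<Rightarrow> bool" where
  "sub_invertible X S \<longleftrightarrow> (\<exists>Y. is_subinv X S Y)"

definition subinv :: "complex ^'n ^'n \<Rightarrow> 'n set \<Rightarrow> 'n \<Rightarrow> 'n \<Rightarrow> complex" where
  "subinv X S = (SOME Y. is_subinv X S Y)"

definition Lmat :: "complex ^'n ^'n \<Rightarrow> 'n set \<Rightarrow> 'n set \<Rightarrow> complex ^'n ^'n" where
  "Lmat Acur B S = (\<chi> i j. if i \<in> B \<and> j \<in> S then (\<Sum>k\<in>S. Acur $ i $ k * subinv Acur S k j)
                          else if i = j then 1 else 0)"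

text \<open>One elimination step for node g of tree t; A0 is the original matrix A
  (which defines boundary and inner sets).\<close>
definition elim_step :: "complex ^'n ^'n \<Rightarrow> 'n ctree \<Rightarrow>
    (complex ^'n ^'n) \<times> (complex ^'n ^'n) \<Rightarrow> 'n set \<Rightarrow> (complex ^'n ^'n) \<times> (complex ^'n ^'n)" where
  "elim_step A0 t st g =
     (let Li = matrix_inv (Lmat (fst st) (bnd A0 g) (priv A0 t g))
      in (Li ** fst st, Li ** snd st ** ctrans Li))"

text \<open>State (A_(r,g), Sigma_(r,g)) just before eliminating the node at position p of ord.\<close>
definition elim_state :: "complex ^'n ^'n \<Rightarrow> complex ^'n ^'n \<Rightarrow> 'n ctree \<Rightarrow> 'n set list \<Rightarrow> nat
    \<Rightarrow> (complex ^'n ^'n) \<times> (complex ^'n ^'n)" where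
  "elim_state A Sig t ord p = foldl (elim_step A t) (A, Sig) (take p ord)"

definition elim_welldef :: "complex ^'n ^'n \<Rightarrow> complex ^'n ^'n \<Rightarrow> 'n ctree \<Rightarrow> 'n set list \<Rightarrow> bool" where
  "elim_welldef A Sig t ord \<longleftrightarrow>
     (\<forall>p < length ord. sub_invertible (fst (elim_state A Sig t ord p)) (priv A t (ord ! p)))"

end

theory Submission
  imports Defs
begin


definition ell :: "complex ^'n ^'n \<Rightarrow> 'n set \<Rightarrow> 'n \<Rightarrow> 'n \<Rightarrow> complex" where
  "ell X S i j = (\<Sum>k\<in>S. X $ i $ k * subinv X S k j)"

definition Emat :: "complex ^'n ^'n \<Rightarrow> 'n set \<Rightarrow> 'n set \<Rightarrow> complex ^'n ^'n" where
  "Emat X B S = (\<chi> i j. if i \<in> B \<and> j \<in> S then ell X S i j else 0)"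

lemma Lmat_eq: "B \<inter> S = {} \<Longrightarrow> Lmat X B S = mat 1 + Emat X B S"
  unfolding Lmat_def Emat_def mat_def ell_def
  by (auto simp: vec_eq_iff)

lemma EE0:
  assumes "S1 \<inter> B2 = {}"
  shows "Emat X1 B1 S1 ** Emat X2 B2 S2 = 0"
  unfolding matrix_matrix_mult_def Emat_def
  using assms by (auto simp: vec_eq_iff intro!: sum.neutral)

lemma matrix_inv_eq:
  fixes L N :: "complex ^'n ^'n"
  assumes "L ** N = mat 1" "N ** L = mat 1"
  shows "matrix_inv L = N"
proof -
  have ex: "\<exists>N'. L ** N' = mat 1 \<and> N' ** L = mat 1" using assms by blast
  define N' where "N' = matrix_inv L"
  have h: "L ** N' = mat 1 \<and> N' ** L = mat 1"
    unfolding N'_def matrix_inv_def by (rule someI_ex[OF ex])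
  have "N' = N' ** (L ** N)" using assms by simp
  also have "\<dots> = (N' ** L) ** N" by (simp add: matrix_mul_assoc)
  also have "\<dots> = N" using h by simp
  finally show ?thesis unfolding N'_def .
qed

lemma matrix_sub_ldistrib: "(A::complex^'n^'n) ** (B - C) = A ** B - A ** C"
  by (simp add: matrix_matrix_mult_def vec_eq_iff sum_subtractf algebra_simps)
lemma matrix_sub_rdistrib: "((B::complex^'n^'n) - C) ** A = B ** A - C ** A"
  by (simp add: matrix_matrix_mult_def vec_eq_iff sum_subtractf algebra_simps)
lemma matrix_add_rdistrib': "((B::complex^'n^'n) + C) ** A = B ** A + C ** A"
  by (simp add: matrix_matrix_mult_def vec_eq_iff sum.distrib algebra_simps)

lemma matrix_inv_Lmat:
  assumes "B \<inter> S = {}"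
  shows "matrix_inv (Lmat X B S) = mat 1 - Emat X B S"
proof -
  have E: "Emat X B S ** Emat X B S = 0" using assms by (intro EE0) auto
  show ?thesis
    by (rule matrix_inv_eq) (simp_all add: Lmat_eq[OF assms] matrix_sub_ldistrib matrix_sub_rdistrib matrix_add_rdistrib' matrix_add_ldistrib E)
qed

lemma ctrans_mult: "ctrans (X ** Y) = ctrans Y ** ctrans (X::complex^'n^'n)"
  by (simp add: ctrans_def matrix_matrix_mult_def vec_eq_iff mult.commute)

lemma L_commute:
  assumes "S1 \<inter> B2 = {}" "S2 \<inter> B1 = {}"
  shows "(mat 1 - Emat X1 B1 S1) ** (mat 1 - Emat X2 B2 S2) = (mat 1 - Emat X2 B2 S2) ** (mat 1 - Emat X1 B1 S1)"
  using EE0[OF assms(1), of X1 B1 X2 S2] EE0[OF assms(2), of X2 B2 X1 S1]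
  by (simp add: matrix_sub_ldistrib matrix_sub_rdistrib algebra_simps)



definition stp :: "'n set \<Rightarrow> 'n set \<Rightarrow> (complex ^'n ^'n) \<times> (complex ^'n ^'n) \<Rightarrow> (complex ^'n ^'n) \<times> (complex ^'n ^'n)" where
  "stp B S st = (let Li = mat 1 - Emat (fst st) B S in (Li ** fst st, Li ** snd st ** ctrans Li))"

definition agree :: "'n set \<Rightarrow> (complex ^'n ^'n) \<times> (complex ^'n ^'n) \<Rightarrow> (complex ^'n ^'n) \<times> (complex ^'n ^'n) \<Rightarrow> bool" where
  "agree g s1 s2 \<longleftrightarrow> (\<forall>a\<in>g. \<forall>b\<in>g. fst s1 $ a $ b = fst s2 $ a $ b \<and> snd s1 $ a $ b = snd s2 $ a $ b)"

lemma agree_refl: "agree g s s" by (simp add: agree_def)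
lemma agree_sym: "agree g s1 s2 \<Longrightarrow> agree g s2 s1" by (simp add: agree_def)
lemma agree_trans: "agree g s1 s2 \<Longrightarrow> agree g s2 s3 \<Longrightarrow> agree g s1 s3" by (simp add: agree_def)

lemma elim_step_stp:
  assumes "bnd A0 g \<inter> priv A0 t g = {}"
  shows "elim_step A0 t st g = stp (bnd A0 g) (priv A0 t g) st"
  unfolding elim_step_def stp_def using matrix_inv_Lmat[OF assms] by simp

lemma is_subinv_cong:
  assumes "\<forall>i\<in>S. \<forall>k\<in>S. X$i$k = X'$i$k"
  shows "is_subinv X S = is_subinv X' S"
  unfolding is_subinv_def using assms by (auto simp: fun_eq_iff)

lemma Emat_cong:
  assumes "\<forall>i\<in>B \<union> S. \<forall>k\<in>S. X$i$k = X'$i$k"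
  shows "Emat X B S = Emat X' B S"
proof -
  have "subinv X S = subinv X' S"
    unfolding subinv_def using is_subinv_cong[of S X X'] assms by auto
  then show ?thesis unfolding Emat_def ell_def using assms by (auto simp: vec_eq_iff)
qed

lemma row_id:
  assumes "a \<notin> B" shows "((mat 1 - Emat X B S) ** Y)$a$b = Y$a$b"
proof -
  have "\<And>k. (mat 1 - Emat X B S)$a$k * Y$k$b = (if a = k then Y$k$b else 0)"
    using assms by (simp add: Emat_def mat_def)
  then show ?thesis unfolding matrix_matrix_mult_def by simp
qed

lemma col_id:
  assumes "b \<notin> B" shows "(Y ** ctrans (mat 1 - Emat X B S))$a$b = Y$a$b"
proof -
  have "\<And>k. Y$a$k * ctrans (mat 1 - Emat X B S)$k$b = (if b = k then Y$a$k else 0)"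
    using assms by (simp add: Emat_def mat_def ctrans_def)
  then show ?thesis unfolding matrix_matrix_mult_def by simp
qed

lemma stp_fst: "fst (stp B S st) = (mat 1 - Emat (fst st) B S) ** fst st"
  by (simp add: stp_def Let_def)
lemma stp_snd: "snd (stp B S st) = (mat 1 - Emat (fst st) B S) ** snd st ** ctrans (mat 1 - Emat (fst st) B S)"
  by (simp add: stp_def Let_def)

lemma stp_disj: assumes "B \<inter> g = {}" shows "agree g (stp B S st) st"
  unfolding agree_def
proof (intro ballI conjI)
  fix a b assume "a \<in> g" "b \<in> g"
  then have "a \<notin> B" "b \<notin> B" using assms by auto
  then show "fst (stp B S st) $ a $ b = fst st $ a $ b" "snd (stp B S st) $ a $ b = snd st $ a $ b"
    by (simp_all add: stp_fst stp_snd row_id col_id)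
qed

lemma loc_mult:
  assumes "\<forall>a\<in>g. \<forall>k. k \<notin> g \<longrightarrow> M$a$k = 0"
    and "\<forall>a\<in>g. \<forall>b\<in>g. X1$a$b = X2$a$b" and "a \<in> g" "b \<in> g"
  shows "(M ** X1)$a$b = (M ** X2)$a$b"
  unfolding matrix_matrix_mult_def using assms
  by (auto intro!: sum.cong) (metis mult_zero_left)

lemma loc_mult2:
  assumes "\<forall>a\<in>g. \<forall>k. k \<notin> g \<longrightarrow> M$a$k = 0"
    and "\<forall>a\<in>g. \<forall>b\<in>g. X1$a$b = X2$a$b" and "a \<in> g" "b \<in> g"
  shows "(X1 ** ctrans M)$a$b = (X2 ** ctrans M)$a$b"
  unfolding matrix_matrix_mult_def ctrans_def using assms
  by (auto intro!: sum.cong) (metis complex_cnj_zero mult_zero_right)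

lemma stp_loc:
  assumes "B \<subseteq> g" "S \<subseteq> g" "agree g s1 s2"
  shows "agree g (stp B S s1) (stp B S s2)"
proof -
  have E: "Emat (fst s1) B S = Emat (fst s2) B S"
    by (rule Emat_cong) (use assms in \<open>auto simp: agree_def subset_iff\<close>)
  define M where "M = mat 1 - Emat (fst s2) B S"
  have M0: "\<forall>a\<in>g. \<forall>k. k \<notin> g \<longrightarrow> M$a$k = 0"
    unfolding M_def Emat_def mat_def using assms(2) by auto
  have A: "\<forall>a\<in>g. \<forall>b\<in>g. fst s1$a$b = fst s2$a$b" "\<forall>a\<in>g. \<forall>b\<in>g. snd s1$a$b = snd s2$a$b"
    using assms(3) by (auto simp: agree_def)
  have P1: "\<forall>a\<in>g. \<forall>b\<in>g. (M ** snd s1)$a$b = (M ** snd s2)$a$b"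
    using loc_mult[OF M0 A(2)] by blast
  show ?thesis
    unfolding agree_def stp_def Let_def E M_def[symmetric]
    using loc_mult[OF M0 A(1)] loc_mult2[OF M0 P1] by auto
qed

lemma stp_comm:
  assumes "B1 \<inter> (B2 \<union> S2) = {}" "B2 \<inter> (B1 \<union> S1) = {}"
  shows "stp B1 S1 (stp B2 S2 st) = stp B2 S2 (stp B1 S1 st)"
proof -
  obtain X Y where st: "st = (X, Y)" by fastforce
  define L1 where "L1 = mat 1 - Emat X B1 S1"
  define L2 where "L2 = mat 1 - Emat X B2 S2"
  have e1: "Emat (L2 ** X) B1 S1 = Emat X B1 S1"
    by (rule Emat_cong) (use assms in \<open>auto simp: L2_def intro!: row_id\<close>)
  have e2: "Emat (L1 ** X) B2 S2 = Emat X B2 S2"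
    by (rule Emat_cong) (use assms in \<open>auto simp: L1_def intro!: row_id\<close>)
  have c: "L1 ** L2 = L2 ** L1" unfolding L1_def L2_def by (rule L_commute) (use assms in auto)
  have c': "ctrans L2 ** ctrans L1 = ctrans L1 ** ctrans L2"
    using c ctrans_mult by metis
  have "L1 ** (L2 ** Y ** ctrans L2) ** ctrans L1 = (L1 ** L2) ** Y ** (ctrans L2 ** ctrans L1)"
    by (simp add: matrix_mul_assoc)
  also have "\<dots> = (L2 ** L1) ** Y ** (ctrans L1 ** ctrans L2)" by (simp only: c c')
  also have "\<dots> = L2 ** (L1 ** Y ** ctrans L1) ** ctrans L2"
    by (simp add: matrix_mul_assoc)
  finally have s: "L1 ** (L2 ** Y ** ctrans L2) ** ctrans L1 = L2 ** (L1 ** Y ** ctrans L1) ** ctrans L2" .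
  have f: "L1 ** (L2 ** X) = L2 ** (L1 ** X)" by (simp add: matrix_mul_assoc c)
  show ?thesis
    unfolding stp_def Let_def st fst_conv snd_conv L1_def[symmetric] L2_def[symmetric]
      e1 e2 L1_def[symmetric] L2_def[symmetric]
    using s f by simp
qed



lemma foldl_filter_agree:
  assumes "\<forall>h\<in>set xs. h \<subseteq> g \<longrightarrow> (\<forall>s1 s2. agree g s1 s2 \<longrightarrow> agree g (f s1 h) (f s2 h))"
      "\<forall>h\<in>set xs. \<not> h \<subseteq> g \<longrightarrow> (\<forall>s. agree g (f s h) s)"
      "agree g s1 s2"
  shows "agree g (foldl f s1 xs) (foldl f s2 (filter (\<lambda>h. h \<subseteq> g) xs))"
  using assms
proof (induction xs arbitrary: s1 s2)
  case Nil
  then show ?case by simp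
next
  case (Cons h xs)
  show ?case
  proof (cases "h \<subseteq> g")
    case True
    have a: "agree g (f s1 h) (f s2 h)" using Cons.prems(1,3) True by (meson list.set_intros(1))
    have "agree g (foldl f (f s1 h) xs) (foldl f (f s2 h) (filter (\<lambda>h. h \<subseteq> g) xs))"
      by (rule Cons.IH) (use Cons.prems(1,2) a in \<open>simp_all\<close>)
    then show ?thesis using True by simp
  next
    case False
    have "agree g (f s1 h) s1" using Cons.prems(2) False by (meson list.set_intros(1))
    then have a: "agree g (f s1 h) s2" using Cons.prems(3) agree_trans by blast
    have "agree g (foldl f (f s1 h) xs) (foldl f s2 (filter (\<lambda>h. h \<subseteq> g) xs))"
      by (rule Cons.IH) (use Cons.prems(1,2) a in \<open>simp_all\<close>)
    then show ?thesis using False by simp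
  qed
qed

lemma foldl_move:
  "(\<forall>y\<in>set zs. \<forall>s. f (f s x) y = f (f s y) x) \<Longrightarrow> foldl f s (zs @ [x]) = foldl f (f s x) zs"
proof (induction zs arbitrary: s)
  case Nil
  then show ?case by simp
next
  case (Cons z zs)
  then show ?case by simp
qed

lemma foldl_perm:
  fixes xs ys :: "'a set list"
  assumes "distinct xs" "distinct ys" "set xs = set ys"
    "sorted_wrt (\<lambda>a b. \<not> b \<subset> a) xs" "sorted_wrt (\<lambda>a b. \<not> b \<subset> a) ys"
    "\<forall>x\<in>set xs. \<forall>y\<in>set xs. x \<subseteq> y \<or> y \<subseteq> x \<or> x \<inter> y = {}"
    "\<forall>x\<in>set xs. \<forall>y\<in>set xs. x \<inter> y = {} \<longrightarrow> (\<forall>s. f (f s x) y = f (f s y) x)"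
  shows "foldl f s xs = foldl f s ys"
  using assms
proof (induction xs arbitrary: ys s)
  case Nil
  then show ?case by simp
next
  case (Cons x xs)
  have "x \<in> set ys" using Cons.prems(3) by auto
  then obtain ys1 ys2 where ys: "ys = ys1 @ x # ys2" by (meson split_list)
  have x1: "x \<notin> set ys1" "x \<notin> set ys2" using Cons.prems(2) ys by auto
  have sub1: "set ys1 \<subseteq> set xs" using Cons.prems(3) ys x1 by auto
  have disj: "\<forall>y\<in>set ys1. x \<inter> y = {}"
  proof
    fix y assume y: "y \<in> set ys1"
    have "\<not> x \<subset> y" using Cons.prems(5) y unfolding ys by (auto simp: sorted_wrt_append)
    moreover have "\<not> y \<subset> x" using Cons.prems(4) y sub1 by auto
    moreover have "y \<noteq> x" using y x1 by auto
    moreover have "y \<in> set (x # xs)" using y sub1 by auto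
    ultimately show "x \<inter> y = {}" using Cons.prems(6) by auto
  qed
  have comm: "\<forall>y\<in>set ys1. \<forall>s. f (f s x) y = f (f s y) x"
    using Cons.prems(7) disj sub1 by (auto simp: Int_commute)
  have "foldl f s ys = foldl f (foldl f s (ys1 @ [x])) ys2" unfolding ys by simp
  also have "\<dots> = foldl f (foldl f (f s x) ys1) ys2" using foldl_move[OF comm] by simp
  also have "\<dots> = foldl f (f s x) (ys1 @ ys2)" by simp
  also have "\<dots> = foldl f (f s x) xs"
  proof (rule sym, rule Cons.IH)
    show "distinct xs" using Cons.prems(1) by simp
    show "distinct (ys1 @ ys2)" using Cons.prems(2) ys by auto
    show "set xs = set (ys1 @ ys2)" using Cons.prems(1,3) ys x1 by auto
    show "sorted_wrt (\<lambda>a b. \<not> b \<subset> a) xs" using Cons.prems(4) by simp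
    show "sorted_wrt (\<lambda>a b. \<not> b \<subset> a) (ys1 @ ys2)" using Cons.prems(5) ys by (auto simp: sorted_wrt_append)
    show "\<forall>x\<in>set xs. \<forall>y\<in>set xs. x \<subseteq> y \<or> y \<subseteq> x \<or> x \<inter> y = {}" using Cons.prems(6) by simp
    show "\<forall>xa\<in>set xs. \<forall>y\<in>set xs. xa \<inter> y = {} \<longrightarrow> (\<forall>s. f (f s xa) y = f (f s y) xa)" using Cons.prems(7) by (meson list.set_intros(2))
  qed
  finally show ?case by simp
qed



lemma subtrees_refl: "t \<in> subtrees t" by (cases t) auto

lemma subtrees_trans: "u \<in> subtrees t \<Longrightarrow> v \<in> subtrees u \<Longrightarrow> v \<in> subtrees t"
  by (induction t) auto

lemma wf_sub: "wf_ctree t \<Longrightarrow> u \<in> subtrees t \<Longrightarrow> wf_ctree u"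
  by (induction t) auto

lemma cl_sub: "wf_ctree t \<Longrightarrow> u \<in> subtrees t \<Longrightarrow> cl u \<subseteq> cl t"
  by (induction t) auto

lemma cl_ne: "wf_ctree t \<Longrightarrow> cl t \<noteq> {}"
  by (induction t) auto

lemma sub_eq:
  assumes "wf_ctree u" "v \<in> subtrees u" "cl u \<subseteq> cl v" shows "v = u"
proof (cases u)
  case (Leaf c) then show ?thesis using assms by auto
next
  case (Node c l r)
  show ?thesis
  proof (rule ccontr)
    assume "v \<noteq> u"
    then have "v \<in> subtrees l \<or> v \<in> subtrees r" using assms(2) Node by auto
    then show False
    proof
      assume "v \<in> subtrees l"
      then have "cl v \<subseteq> cl l" using assms(1) Node cl_sub by auto
      moreover have "cl r \<noteq> {}" using assms(1) Node cl_ne by auto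
      ultimately show False using assms(1,3) Node by auto
    next
      assume "v \<in> subtrees r"
      then have "cl v \<subseteq> cl r" using assms(1) Node cl_sub by auto
      moreover have "cl l \<noteq> {}" using assms(1) Node cl_ne by auto
      ultimately show False using assms(1,3) Node by auto
    qed
  qed
qed

lemma sub_below:
  "wf_ctree t \<Longrightarrow> u \<in> subtrees t \<Longrightarrow> v \<in> subtrees t \<Longrightarrow> cl v \<subseteq> cl u \<Longrightarrow> v \<in> subtrees u"
proof (induction t arbitrary: u v)
  case (Leaf c) then show ?case by auto
next
  case (Node c l r)
  have wl: "wf_ctree l" and wr: "wf_ctree r" and dj: "cl l \<inter> cl r = {}" and cu: "c = cl l \<union> cl r"
    using Node.prems by auto
  have nl: "cl l \<noteq> {}" and nr: "cl r \<noteq> {}" using wl wr cl_ne by auto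
  consider "u = Node c l r" | "u \<in> subtrees l" | "u \<in> subtrees r" using Node.prems(2) by auto
  then show ?case
  proof cases
    case 1 then show ?thesis using Node.prems(3) by simp
  next
    case 2
    have cu: "cl u \<subseteq> cl l" using 2 wl cl_sub by auto
    consider "v = Node c l r" | "v \<in> subtrees l" | "v \<in> subtrees r" using Node.prems(3) by auto
    then show ?thesis
    proof cases
      case 1 then show ?thesis using Node.prems(4) cu nr dj \<open>c = cl l \<union> cl r\<close> by auto
    next
      case v2: 2 then show ?thesis using Node.IH(1)[OF wl 2 v2] Node.prems(4) by simp
    next
      case 3
      have "cl v \<subseteq> cl r" using 3 wr cl_sub by auto
      moreover have "cl v \<noteq> {}" using 3 wr wf_sub cl_ne by blast
      ultimately show ?thesis using Node.prems(4) cu dj by auto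
    qed
  next
    case 3
    have cu: "cl u \<subseteq> cl r" using 3 wr cl_sub by auto
    consider "v = Node c l r" | "v \<in> subtrees l" | "v \<in> subtrees r" using Node.prems(3) by auto
    then show ?thesis
    proof cases
      case 1 then show ?thesis using Node.prems(4) cu nl dj \<open>c = cl l \<union> cl r\<close> by auto
    next
      case 2
      have "cl v \<subseteq> cl l" using 2 wl cl_sub by auto
      moreover have "cl v \<noteq> {}" using 2 wl wf_sub cl_ne by blast
      ultimately show ?thesis using Node.prems(4) cu dj by auto
    next
      case v3: 3 then show ?thesis using Node.IH(2)[OF wr 3 v3] Node.prems(4) by simp
    qed
  qed
qed

lemma laminar:
  "wf_ctree t \<Longrightarrow> u \<in> subtrees t \<Longrightarrow> v \<in> subtrees t \<Longrightarrow> cl u \<subseteq> cl v \<or> cl v \<subseteq> cl u \<or> cl u \<inter> cl v = {}"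
proof (induction t arbitrary: u v)
  case (Leaf c) then show ?case by auto
next
  case (Node c l r)
  have wl: "wf_ctree l" and wr: "wf_ctree r" and dj: "cl l \<inter> cl r = {}" and cu: "c = cl l \<union> cl r"
    using Node.prems by auto
  have A: "\<And>w. w \<in> subtrees l \<Longrightarrow> cl w \<subseteq> c" "\<And>w. w \<in> subtrees r \<Longrightarrow> cl w \<subseteq> c"
    using cl_sub wl wr cu by blast+
  have B: "\<And>w w'. w \<in> subtrees l \<Longrightarrow> w' \<in> subtrees r \<Longrightarrow> cl w \<inter> cl w' = {}"
    using cl_sub wl wr dj by blast
  have Ur: "cl (Node c l r) = c" by simp
  consider "u = Node c l r" | "u \<in> subtrees l" | "u \<in> subtrees r" using Node.prems(2) by auto
  then show ?case
  proof cases
    case 1 then show ?thesis using Node.prems(3) A by auto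
  next
    case 2
    consider "v = Node c l r" | "v \<in> subtrees l" | "v \<in> subtrees r" using Node.prems(3) by auto
    then show ?thesis
    proof cases
      case 1 then show ?thesis using 2 A by auto
    next
      case v2: 2 then show ?thesis using Node.IH(1)[OF wl 2 v2] by blast
    next
      case 3 then show ?thesis using 2 B by blast
    qed
  next
    case 3
    consider "v = Node c l r" | "v \<in> subtrees l" | "v \<in> subtrees r" using Node.prems(3) by auto
    then show ?thesis
    proof cases
      case 1 then show ?thesis using 3 A by auto
    next
      case 2 then show ?thesis using 3 B by (auto simp: Int_commute)
    next
      case v3: 3 then show ?thesis using Node.IH(2)[OF wr 3 v3] by blast
    qed
  qed
qed

lemma uniq:
  "wf_ctree t \<Longrightarrow> u \<in> subtrees t \<Longrightarrow> v \<in> subtrees t \<Longrightarrow> cl u = cl v \<Longrightarrow> u = v"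
  by (metis sub_below sub_eq wf_sub order_refl)

lemma proper_sub: "v \<in> subtrees u \<Longrightarrow> v \<noteq> u \<Longrightarrow> v \<in> proper_subtrees u"
  by (cases u) auto

lemma clusters_Leaf[simp]: "clusters (Leaf c) = {c}" by (simp add: clusters_def)
lemma clusters_Node[simp]: "clusters (Node c l r) = insert c (clusters l \<union> clusters r)"
  by (simp add: clusters_def image_Un)

definition privF :: "complex ^'n ^'n \<Rightarrow> 'n set set \<Rightarrow> 'n set \<Rightarrow> 'n set" where
  "privF A F h = inner A h - \<Union>{inner A h' | h'. h' \<in> F \<and> h' \<subset> h}"

lemma inner_mono: "C \<subseteq> D \<Longrightarrow> inner A C \<subseteq> inner A D"
  unfolding inner_def bnd_def by auto

lemma privF_cong: "F \<inter> {h'. h' \<subset> h} = F' \<inter> {h'. h' \<subset> h} \<Longrightarrow> privF A F h = privF A F' h"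
proof -
  assume a: "F \<inter> {h'. h' \<subset> h} = F' \<inter> {h'. h' \<subset> h}"
  have "\<And>h'. (h' \<in> F \<and> h' \<subset> h) = (h' \<in> F' \<and> h' \<subset> h)" using a by blast
  then show ?thesis unfolding privF_def by simp
qed

lemma privF_sub: "privF A F h \<subseteq> h - bnd A h"
  unfolding privF_def inner_def by auto

lemma clusters_sub: "wf_ctree t \<Longrightarrow> h \<in> clusters t \<Longrightarrow> h \<subseteq> cl t"
  unfolding clusters_def using cl_sub by auto

lemma priv_of_Node:
  assumes w: "wf_ctree (Node c l r)"
  shows "priv_of A (Node c l r) = privF A (clusters (Node c l r)) c"
proof -
  have wl: "wf_ctree l" and wr: "wf_ctree r" and dj: "cl l \<inter> cl r = {}" and cu: "c = cl l \<union> cl r"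
    using w by auto
  have nl: "cl l \<noteq> {}" and nr: "cl r \<noteq> {}" using wl wr cl_ne by auto
  have ll: "cl l \<subset> c" "cl r \<subset> c" using cu dj nl nr by auto
  have incl: "cl l \<in> clusters l" "cl r \<in> clusters r" unfolding clusters_def using subtrees_refl by auto
  have U: "\<Union>{inner A h' | h'. h' \<in> clusters (Node c l r) \<and> h' \<subset> c} = inner A (cl l) \<union> inner A (cl r)"
  proof
    show "\<Union>{inner A h' | h'. h' \<in> clusters (Node c l r) \<and> h' \<subset> c} \<subseteq> inner A (cl l) \<union> inner A (cl r)"
    proof
      fix x assume "x \<in> \<Union>{inner A h' | h'. h' \<in> clusters (Node c l r) \<and> h' \<subset> c}"
      then obtain h' where h': "h' \<in> clusters (Node c l r)" "h' \<subset> c" "x \<in> inner A h'" by blast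
      then have "h' \<in> clusters l \<or> h' \<in> clusters r" by auto
      then show "x \<in> inner A (cl l) \<union> inner A (cl r)"
      proof
        assume "h' \<in> clusters l"
        then have "h' \<subseteq> cl l" using clusters_sub wl by blast
        then show ?thesis using h'(3) inner_mono by blast
      next
        assume "h' \<in> clusters r"
        then have "h' \<subseteq> cl r" using clusters_sub wr by blast
        then show ?thesis using h'(3) inner_mono by blast
      qed
    qed
  next
    have "cl l \<in> clusters (Node c l r)" "cl r \<in> clusters (Node c l r)" using incl by auto
    then show "inner A (cl l) \<union> inner A (cl r) \<subseteq> \<Union>{inner A h' | h'. h' \<in> clusters (Node c l r) \<and> h' \<subset> c}"
      using ll by blast
  qed
  show ?thesis unfolding privF_def U by simp
qed

lemma priv_of_eq: assumes "wf_ctree u" shows "priv_of A u = privF A (clusters u) (cl u)"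
proof (cases u)
  case (Leaf c) then show ?thesis by (simp add: privF_def)
next
  case (Node c l r)
  then show ?thesis using priv_of_Node[of c l r A] assms by simp
qed

lemma priv_eq:
  assumes "wf_ctree t" "h \<in> clusters t"
  shows "priv A t h = privF A (clusters t) h"
proof -
  obtain u where u: "u \<in> subtrees t" "cl u = h" using assms(2) unfolding clusters_def by auto
  have the: "(THE u. u \<in> subtrees t \<and> cl u = h) = u"
    by (rule the_equality) (use u uniq[OF assms(1)] in auto)
  have wu: "wf_ctree u" using wf_sub assms(1) u by blast
  have "clusters u \<inter> {h'. h' \<subset> h} = clusters t \<inter> {h'. h' \<subset> h}"
  proof
    show "clusters u \<inter> {h'. h' \<subset> h} \<subseteq> clusters t \<inter> {h'. h' \<subset> h}"
    proof
      fix h' assume "h' \<in> clusters u \<inter> {h'. h' \<subset> h}"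
      then obtain v where "v \<in> subtrees u" "cl v = h'" "h' \<subset> h" unfolding clusters_def by auto
      then show "h' \<in> clusters t \<inter> {h'. h' \<subset> h}" unfolding clusters_def
        using subtrees_trans[OF u(1)] by auto
    qed
    show "clusters t \<inter> {h'. h' \<subset> h} \<subseteq> clusters u \<inter> {h'. h' \<subset> h}"
    proof
      fix h' assume "h' \<in> clusters t \<inter> {h'. h' \<subset> h}"
      then obtain v where v: "v \<in> subtrees t" "cl v = h'" "h' \<subset> h" unfolding clusters_def by auto
      then have "v \<in> subtrees u" using sub_below[OF assms(1) u(1) v(1)] u(2) by auto
      then show "h' \<in> clusters u \<inter> {h'. h' \<subset> h}" using v unfolding clusters_def by auto
    qed
  qed
  then show ?thesis
    unfolding priv_def the priv_of_eq[OF wu] u(2) by (rule privF_cong)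
qed



lemma aug_go_props:
  assumes "wf_ctree t" "wf_ctree acc" "Leaf R \<in> subtrees t" "cl acc = - cl t"
  shows "wf_ctree (aug_go R acc t) \<and> clusters (aug_go R acc t) =
    clusters acc \<union> {c \<in> clusters t. \<not> R \<subseteq> c} \<union> {- c | c. c \<in> clusters t \<and> R \<subseteq> c \<and> c \<noteq> cl t}"
  using assms
proof (induction t arbitrary: acc)
  case (Leaf c)
  then show ?case by auto
next
  case (Node c l r)
  have wl: "wf_ctree l" and wr: "wf_ctree r" and dj: "cl l \<inter> cl r = {}" and cu: "c = cl l \<union> cl r"
    using Node.prems by auto
  have Rne: "R \<noteq> {}" using cl_ne wf_sub Node.prems(1,3) by fastforce
  have nl: "cl l \<noteq> {}" and nr: "cl r \<noteq> {}" using wl wr cl_ne by auto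
  have cr: "\<And>x. x \<in> clusters r \<Longrightarrow> x \<subseteq> cl r" using clusters_sub wr by blast
  have clc: "\<And>x. x \<in> clusters l \<Longrightarrow> x \<subseteq> cl l" using clusters_sub wl by blast
  have inl: "cl l \<in> clusters l" "cl r \<in> clusters r" unfolding clusters_def using subtrees_refl by auto
  consider "Leaf R \<in> subtrees l" | "Leaf R \<in> subtrees r" using Node.prems(3) by auto
  then show ?case
  proof cases
    case 1
    have Rl: "R \<subseteq> cl l" using cl_sub[OF wl 1] by simp
    define acc' where "acc' = Node (cl r \<union> cl acc) r acc"
    have wa: "wf_ctree acc'" unfolding acc'_def using wr Node.prems(2,4) cu by auto
    have ca: "cl acc' = - cl l" unfolding acc'_def using Node.prems(4) cu dj by auto
    have IH: "wf_ctree (aug_go R acc' l) \<and> clusters (aug_go R acc' l) =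
      clusters acc' \<union> {c \<in> clusters l. \<not> R \<subseteq> c} \<union> {- c | c. c \<in> clusters l \<and> R \<subseteq> c \<and> c \<noteq> cl l}"
      using Node.IH(1)[OF wl wa 1 ca] .
    have eq: "aug_go R acc (Node c l r) = aug_go R acc' l" using Rl by (simp add: acc'_def)
    have rn: "\<And>x. x \<in> clusters r \<Longrightarrow> \<not> R \<subseteq> x" using cr Rl dj Rne by blast
    have ln: "\<And>x. x \<in> clusters l \<Longrightarrow> x \<noteq> c" using clc cu nr dj by blast
    have cacc: "cl r \<union> cl acc = - cl l" using ca unfolding acc'_def by simp
    have Rc: "R \<subseteq> c" using Rl cu by auto
    have S1: "{x \<in> clusters (Node c l r). \<not> R \<subseteq> x} = {x\<in>clusters l. \<not> R \<subseteq> x} \<union> clusters r"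
      using rn Rc by auto
    have S2: "{- x | x. x \<in> clusters (Node c l r) \<and> R \<subseteq> x \<and> x \<noteq> cl (Node c l r)}
       = insert (- cl l) {- x | x. x \<in> clusters l \<and> R \<subseteq> x \<and> x \<noteq> cl l}"
    proof (rule set_eqI, rule iffI)
      fix y assume "y \<in> {- x | x. x \<in> clusters (Node c l r) \<and> R \<subseteq> x \<and> x \<noteq> cl (Node c l r)}"
      then obtain x where x: "y = - x" "x \<in> clusters (Node c l r)" "R \<subseteq> x" "x \<noteq> c" by auto
      then have "x \<in> clusters l" using rn by auto
      then show "y \<in> insert (- cl l) {- x | x. x \<in> clusters l \<and> R \<subseteq> x \<and> x \<noteq> cl l}"
        using x by blast
    next
      fix y assume "y \<in> insert (- cl l) {- x | x. x \<in> clusters l \<and> R \<subseteq> x \<and> x \<noteq> cl l}"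
      then consider "y = - cl l" | x where "y = - x" "x \<in> clusters l" "R \<subseteq> x" by blast
      then show "y \<in> {- x | x. x \<in> clusters (Node c l r) \<and> R \<subseteq> x \<and> x \<noteq> cl (Node c l r)}"
      proof cases
        case 1 then show ?thesis using inl Rl ln[of "cl l"] by force
      next
        case 2 then show ?thesis using ln[of x] by force
      qed
    qed
    have cl': "clusters acc' = insert (- cl l) (clusters r \<union> clusters acc)"
      unfolding acc'_def using cacc by simp
    show ?thesis unfolding eq S1 S2 using IH unfolding cl' by blast
  next
    case 2
    have Rr: "R \<subseteq> cl r" using cl_sub[OF wr 2] by simp
    have nRl: "\<not> R \<subseteq> cl l" using Rr dj Rne by blast
    define acc' where "acc' = Node (cl l \<union> cl acc) l acc"
    have wa: "wf_ctree acc'" unfolding acc'_def using wl Node.prems(2,4) cu by auto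
    have ca: "cl acc' = - cl r" unfolding acc'_def using Node.prems(4) cu dj by auto
    have IH: "wf_ctree (aug_go R acc' r) \<and> clusters (aug_go R acc' r) =
      clusters acc' \<union> {c \<in> clusters r. \<not> R \<subseteq> c} \<union> {- c | c. c \<in> clusters r \<and> R \<subseteq> c \<and> c \<noteq> cl r}"
      using Node.IH(2)[OF wr wa 2 ca] .
    have eq: "aug_go R acc (Node c l r) = aug_go R acc' r" using nRl by (simp add: acc'_def)
    have rn: "\<And>x. x \<in> clusters l \<Longrightarrow> \<not> R \<subseteq> x" using clc Rr dj Rne by blast
    have ln: "\<And>x. x \<in> clusters r \<Longrightarrow> x \<noteq> c" using cr cu nl dj by blast
    have cacc: "cl l \<union> cl acc = - cl r" using ca unfolding acc'_def by simp
    have Rc: "R \<subseteq> c" using Rr cu by auto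
    have S1: "{x \<in> clusters (Node c l r). \<not> R \<subseteq> x} = {x\<in>clusters r. \<not> R \<subseteq> x} \<union> clusters l"
      using rn Rc by auto
    have S2: "{- x | x. x \<in> clusters (Node c l r) \<and> R \<subseteq> x \<and> x \<noteq> cl (Node c l r)}
       = insert (- cl r) {- x | x. x \<in> clusters r \<and> R \<subseteq> x \<and> x \<noteq> cl r}"
    proof (rule set_eqI, rule iffI)
      fix y assume "y \<in> {- x | x. x \<in> clusters (Node c l r) \<and> R \<subseteq> x \<and> x \<noteq> cl (Node c l r)}"
      then obtain x where x: "y = - x" "x \<in> clusters (Node c l r)" "R \<subseteq> x" "x \<noteq> c" by auto
      then have "x \<in> clusters r" using rn by auto
      then show "y \<in> insert (- cl r) {- x | x. x \<in> clusters r \<and> R \<subseteq> x \<and> x \<noteq> cl r}"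
        using x by blast
    next
      fix y assume "y \<in> insert (- cl r) {- x | x. x \<in> clusters r \<and> R \<subseteq> x \<and> x \<noteq> cl r}"
      then consider "y = - cl r" | x where "y = - x" "x \<in> clusters r" "R \<subseteq> x" by blast
      then show "y \<in> {- x | x. x \<in> clusters (Node c l r) \<and> R \<subseteq> x \<and> x \<noteq> cl (Node c l r)}"
      proof cases
        case 1 then show ?thesis using inl Rr ln[of "cl r"] by force
      next
        case 2 then show ?thesis using ln[of x] by force
      qed
    qed
    have cl': "clusters acc' = insert (- cl r) (clusters l \<union> clusters acc)"
      unfolding acc'_def using cacc by simp
    show ?thesis unfolding eq S1 S2 using IH unfolding cl' by blast
  qed
qed



definition fam :: "'n set set \<Rightarrow> 'n set \<Rightarrow> 'n set set" where
  "fam CT R = {c \<in> CT. \<not> R \<subseteq> c} \<union> {- c | c. c \<in> CT \<and> R \<subseteq> c \<and> c \<noteq> UNIV}"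

lemma memI: "y = - x \<Longrightarrow> P x \<Longrightarrow> y \<in> {- x | x. P x}" by blast

lemma aug_tree_props:
  assumes "cluster_tree T" "\<not> (\<exists>c. T = Leaf c)" "Leaf R \<in> subtrees T"
  shows "wf_ctree (aug_tree R T) \<and> clusters (aug_tree R T) = fam (clusters T) R"
proof -
  obtain M l r where T: "T = Node M l r" using assms(2) by (cases T) auto
  have w: "wf_ctree T" and MU: "M = UNIV" using assms(1) T by (auto simp: cluster_tree_def)
  have wl: "wf_ctree l" and wr: "wf_ctree r" and dj: "cl l \<inter> cl r = {}" and cu: "M = cl l \<union> cl r"
    using w T by auto
  have Rne: "R \<noteq> {}" using cl_ne wf_sub w assms(3) by fastforce
  have nl: "cl l \<noteq> {}" and nr: "cl r \<noteq> {}" using wl wr cl_ne by auto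
  have cr: "\<And>x. x \<in> clusters r \<Longrightarrow> x \<subseteq> cl r" using clusters_sub wr by blast
  have clc: "\<And>x. x \<in> clusters l \<Longrightarrow> x \<subseteq> cl l" using clusters_sub wl by blast
  have inl: "cl l \<in> clusters l" "cl r \<in> clusters r" unfolding clusters_def using subtrees_refl by auto
  have compl: "- cl l = cl r" "- cl r = cl l" using cu MU dj by auto
  have cT: "clusters T = insert UNIV (clusters l \<union> clusters r)" using T MU by simp
  consider "Leaf R \<in> subtrees l" | "Leaf R \<in> subtrees r" using assms(3) T by auto
  then show ?thesis
  proof cases
    case 1
    have Rl: "R \<subseteq> cl l" using cl_sub[OF wl 1] by simp
    have eq: "aug_tree R T = aug_go R r l" using Rl T by simp
    have P: "wf_ctree (aug_go R r l) \<and> clusters (aug_go R r l) =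
      clusters r \<union> {c \<in> clusters l. \<not> R \<subseteq> c} \<union> {- c | c. c \<in> clusters l \<and> R \<subseteq> c \<and> c \<noteq> cl l}"
      by (rule aug_go_props[OF wl wr 1]) (simp add: compl)
    have rn: "\<And>x. x \<in> clusters r \<Longrightarrow> \<not> R \<subseteq> x" using cr Rl dj Rne by blast
    have ln: "\<And>x. x \<in> clusters l \<Longrightarrow> x \<noteq> UNIV" using clc nr dj by blast
    have S1: "{x \<in> clusters T. \<not> R \<subseteq> x} = {x\<in>clusters l. \<not> R \<subseteq> x} \<union> clusters r"
      using rn unfolding cT by auto
    have S2: "{- x | x. x \<in> clusters T \<and> R \<subseteq> x \<and> x \<noteq> UNIV}
       = insert (cl r) {- x | x. x \<in> clusters l \<and> R \<subseteq> x \<and> x \<noteq> cl l}"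
    proof (rule set_eqI, rule iffI)
      fix y assume "y \<in> {- x | x. x \<in> clusters T \<and> R \<subseteq> x \<and> x \<noteq> UNIV}"
      then obtain x where x: "y = - x" "x \<in> clusters T" "R \<subseteq> x" "x \<noteq> UNIV" by blast
      have "x \<notin> clusters r" using rn x(3) by blast
      then have xl: "x \<in> clusters l" using x(2,4) unfolding cT by blast
      show "y \<in> insert (cl r) {- x | x. x \<in> clusters l \<and> R \<subseteq> x \<and> x \<noteq> cl l}"
      proof (cases "x = cl l")
        case True then show ?thesis using x(1) compl by simp
      next
        case False then show ?thesis by (intro insertI2 memI[OF x(1)]) (use xl x(3) in blast)
      qed
    next
      fix y assume "y \<in> insert (cl r) {- x | x. x \<in> clusters l \<and> R \<subseteq> x \<and> x \<noteq> cl l}"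
      then consider "y = cl r" | x where "y = - x" "x \<in> clusters l" "R \<subseteq> x" by blast
      then show "y \<in> {- x | x. x \<in> clusters T \<and> R \<subseteq> x \<and> x \<noteq> UNIV}"
      proof cases
        case 1
        have "cl l \<in> clusters T" using inl unfolding cT by blast
        moreover have "y = - cl l" using 1 compl by simp
        ultimately show ?thesis by (intro memI[of y "cl l"]) (use Rl ln inl in auto)
      next
        case 2
        have "x \<in> clusters T" using 2 unfolding cT by blast
        then show ?thesis by (intro memI[of y x]) (use 2 ln in auto)
      qed
    qed
    show ?thesis unfolding eq fam_def S1 S2 using P inl by blast
  next
    case 2
    have Rr: "R \<subseteq> cl r" using cl_sub[OF wr 2] by simp
    have nRl: "\<not> R \<subseteq> cl l" using Rr dj Rne by blast
    have eq: "aug_tree R T = aug_go R l r" using nRl T by simp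
    have P: "wf_ctree (aug_go R l r) \<and> clusters (aug_go R l r) =
      clusters l \<union> {c \<in> clusters r. \<not> R \<subseteq> c} \<union> {- c | c. c \<in> clusters r \<and> R \<subseteq> c \<and> c \<noteq> cl r}"
      by (rule aug_go_props[OF wr wl 2]) (simp add: compl)
    have rn: "\<And>x. x \<in> clusters l \<Longrightarrow> \<not> R \<subseteq> x" using clc Rr dj Rne by blast
    have ln: "\<And>x. x \<in> clusters r \<Longrightarrow> x \<noteq> UNIV" using cr nl dj by blast
    have S1: "{x \<in> clusters T. \<not> R \<subseteq> x} = {x\<in>clusters r. \<not> R \<subseteq> x} \<union> clusters l"
      using rn unfolding cT by auto
    have S2: "{- x | x. x \<in> clusters T \<and> R \<subseteq> x \<and> x \<noteq> UNIV}
       = insert (cl l) {- x | x. x \<in> clusters r \<and> R \<subseteq> x \<and> x \<noteq> cl r}"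
    proof (rule set_eqI, rule iffI)
      fix y assume "y \<in> {- x | x. x \<in> clusters T \<and> R \<subseteq> x \<and> x \<noteq> UNIV}"
      then obtain x where x: "y = - x" "x \<in> clusters T" "R \<subseteq> x" "x \<noteq> UNIV" by blast
      have "x \<notin> clusters l" using rn x(3) by blast
      then have xl: "x \<in> clusters r" using x(2,4) unfolding cT by blast
      show "y \<in> insert (cl l) {- x | x. x \<in> clusters r \<and> R \<subseteq> x \<and> x \<noteq> cl r}"
      proof (cases "x = cl r")
        case True then show ?thesis using x(1) compl by simp
      next
        case False then show ?thesis by (intro insertI2 memI[OF x(1)]) (use xl x(3) in blast)
      qed
    next
      fix y assume "y \<in> insert (cl l) {- x | x. x \<in> clusters r \<and> R \<subseteq> x \<and> x \<noteq> cl r}"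
      then consider "y = cl l" | x where "y = - x" "x \<in> clusters r" "R \<subseteq> x" by blast
      then show "y \<in> {- x | x. x \<in> clusters T \<and> R \<subseteq> x \<and> x \<noteq> UNIV}"
      proof cases
        case 1
        have "cl r \<in> clusters T" using inl unfolding cT by blast
        moreover have "y = - cl r" using 1 compl by simp
        ultimately show ?thesis by (intro memI[of y "cl r"]) (use Rr ln inl in auto)
      next
        case 2
        have "x \<in> clusters T" using 2 unfolding cT by blast
        then show ?thesis by (intro memI[of y x]) (use 2 ln in auto)
      qed
    qed
    show ?thesis unfolding eq fam_def S1 S2 using P inl by blast
  qed
qed

lemma below_basic:
  assumes lam: "\<forall>x\<in>CT. \<forall>y\<in>CT. x \<subseteq> y \<or> y \<subseteq> x \<or> x \<inter> y = {}"
    and Rne: "R \<noteq> {}" and g: "g \<in> CT" "g \<in> fam CT R"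
  shows "fam CT R \<inter> Pow g = CT \<inter> Pow g"
proof -
  have nR: "\<not> R \<subseteq> g"
  proof
    assume Rg: "R \<subseteq> g"
    then obtain c where "g = - c" "R \<subseteq> c" using g(2) unfolding fam_def by auto
    then show False using Rg Rne by auto
  qed
  show ?thesis
  proof (rule set_eqI, rule iffI)
    fix x assume x: "x \<in> fam CT R \<inter> Pow g"
    then consider "x \<in> CT" | c where "x = - c" "c \<in> CT" "R \<subseteq> c" "c \<noteq> UNIV"
      unfolding fam_def by auto
    then show "x \<in> CT \<inter> Pow g"
    proof cases
      case 1 then show ?thesis using x by auto
    next
      case 2
      have xg: "- c \<subseteq> g" using x 2 by auto
      from lam 2(2) g(1) consider "c \<subseteq> g" | "g \<subseteq> c" | "c \<inter> g = {}" by blast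
      then show ?thesis
      proof cases
        case 1 then show ?thesis using 2 nR by auto
      next
        case 3
        then have "x = g" using xg 2 by auto
        then show ?thesis using g by auto
      next
        case 4: 2
        then have "c = UNIV" using xg by auto
        then show ?thesis using 2 by auto
      qed
    qed
  next
    fix x assume "x \<in> CT \<inter> Pow g"
    then show "x \<in> fam CT R \<inter> Pow g" using nR unfolding fam_def by auto
  qed
qed

lemma below_comp:
  assumes Rne: "R \<noteq> {}" and c: "c \<in> CT" "R \<subseteq> c"
  shows "fam CT R \<inter> Pow (- c) = {x \<in> CT. x \<subseteq> - c} \<union> {- d | d. d \<in> CT \<and> c \<subseteq> d \<and> d \<noteq> UNIV}"
proof (rule set_eqI, rule iffI)
  fix x assume x: "x \<in> fam CT R \<inter> Pow (- c)"
  then consider "x \<in> CT" | d where "x = - d" "d \<in> CT" "R \<subseteq> d" "d \<noteq> UNIV"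
    unfolding fam_def by auto
  then show "x \<in> {x \<in> CT. x \<subseteq> - c} \<union> {- d | d. d \<in> CT \<and> c \<subseteq> d \<and> d \<noteq> UNIV}"
  proof cases
    case 1 then show ?thesis using x by auto
  next
    case 2 then show ?thesis using x by auto
  qed
next
  fix x assume x: "x \<in> {x \<in> CT. x \<subseteq> - c} \<union> {- d | d. d \<in> CT \<and> c \<subseteq> d \<and> d \<noteq> UNIV}"
  then consider "x \<in> CT" "x \<subseteq> - c" | d where "x = - d" "d \<in> CT" "c \<subseteq> d" "d \<noteq> UNIV" by auto
  then show "x \<in> fam CT R \<inter> Pow (- c)"
  proof cases
    case 1
    have "\<not> R \<subseteq> x" using 1 c Rne by auto
    then show ?thesis using 1 unfolding fam_def by auto
  next
    case 2 then show ?thesis using c unfolding fam_def by auto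
  qed
qed

lemma family_below:
  assumes lam: "\<forall>x\<in>CT. \<forall>y\<in>CT. x \<subseteq> y \<or> y \<subseteq> x \<or> x \<inter> y = {}"
    and Rne: "R \<noteq> {}" and Qne: "Q \<noteq> {}" and g: "g \<in> fam CT R" "g \<in> fam CT Q"
  shows "fam CT R \<inter> Pow g = fam CT Q \<inter> Pow g"
proof (cases "g \<in> CT")
  case True
  then show ?thesis using below_basic[OF lam Rne True g(1)] below_basic[OF lam Qne True g(2)] by simp
next
  case False
  obtain c where c: "g = - c" "c \<in> CT" "R \<subseteq> c" using g(1) False unfolding fam_def by auto
  obtain c' where c': "g = - c'" "c' \<in> CT" "Q \<subseteq> c'" using g(2) False unfolding fam_def by auto
  have "c' = c" using c c' by (metis double_compl)
  then show ?thesis using below_comp[OF Rne c(2,3)] below_comp[OF Qne c'(2,3)] c c' by simp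
qed



definition sf :: "complex ^'n ^'n \<Rightarrow> 'n set set \<Rightarrow> (complex ^'n ^'n) \<times> (complex ^'n ^'n) \<Rightarrow> 'n set \<Rightarrow> (complex ^'n ^'n) \<times> (complex ^'n ^'n)" where
  "sf A F st h = stp (bnd A h) (privF A F h) st"

lemma bnd_sub: "bnd A h \<subseteq> h" unfolding bnd_def by auto

lemma co_sorted:
  assumes wf: "wf_ctree t" and co: "consistent_ordering t ord"
  shows "sorted_wrt (\<lambda>a b. \<not> b \<subset> a) ord"
proof (unfold sorted_wrt_iff_nth_less, intro allI impI notI)
  fix i j assume ij0: "i < j" "j < length ord" and sub: "ord ! j \<subset> ord ! i"
  have ij: "i < j \<and> j < length ord" using ij0 by simp
  have so: "set ord = clusters t" using co by (simp add: consistent_ordering_def)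
  have il: "i < length ord" using ij by simp
  have "ord ! i \<in> clusters t" "ord ! j \<in> clusters t" using nth_mem[OF il] nth_mem[of j ord] ij so by auto
  then obtain u v where u: "u \<in> subtrees t" "cl u = ord ! i" and v: "v \<in> subtrees t" "cl v = ord ! j"
    unfolding clusters_def by blast
  have "v \<in> subtrees u" using sub_below[OF wf u(1) v(1)] u v sub by auto
  moreover have "v \<noteq> u" using u v sub by auto
  ultimately have "v \<in> proper_subtrees u" by (rule proper_sub)
  moreover have "\<forall>u\<in>subtrees t. \<forall>v\<in>proper_subtrees u. \<forall>p q.
        p < length ord \<and> q < length ord \<and> ord ! p = cl v \<and> ord ! q = cl u \<longrightarrow> p < q"
    using co unfolding consistent_ordering_def by blast
  ultimately have "j < i" using u v ij il by blast
  then show False using ij by simp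
qed

lemma not_in_take:
  assumes "distinct xs" "p < length xs" shows "xs ! p \<notin> set (take p xs)"
proof
  assume "xs ! p \<in> set (take p xs)"
  then obtain i where i: "i < length (take p xs)" "take p xs ! i = xs ! p" by (auto simp: in_set_conv_nth)
  then have "i < p" "xs ! i = xs ! p" by auto
  then show False using assms nth_eq_iff_index_eq by (metis less_trans order.strict_iff_not)
qed

lemma side:
  assumes wf: "wf_ctree t" and co: "consistent_ordering t ord" and p: "p < length ord" and g: "ord ! p = g"
    and F0: "F0 = clusters t \<inter> Pow g"
  defines "D \<equiv> filter (\<lambda>h. h \<subseteq> g) (take p ord)"
  shows "agree g (elim_state A Sig t ord p) (foldl (sf A F0) (A, Sig) D)
    \<and> distinct D \<and> set D = F0 - {g} \<and> sorted_wrt (\<lambda>a b. \<not> b \<subset> a) D"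
proof -
  have so: "set ord = clusters t" and di: "distinct ord" using co by (auto simp: consistent_ordering_def)
  have srt: "sorted_wrt (\<lambda>a b. \<not> b \<subset> a) ord" by (rule co_sorted[OF wf co])
  have gin: "g \<in> clusters t" using p g so nth_mem by blast
  have gnot: "g \<notin> set (take p ord)" using not_in_take[OF di p] g by simp
  have tk: "set (take p ord) \<subseteq> clusters t" using so set_take_subset by metis
  have lam: "\<forall>x\<in>clusters t. \<forall>y\<in>clusters t. x \<subseteq> y \<or> y \<subseteq> x \<or> x \<inter> y = {}"
    using laminar[OF wf] unfolding clusters_def by blast
  have notsup: "\<And>h. h \<in> set (take p ord) \<Longrightarrow> \<not> g \<subset> h"
  proof -
    fix h assume "h \<in> set (take p ord)"
    then obtain i where "i < p" "ord ! i = h" using p by (auto simp: in_set_conv_nth)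
    then show "\<not> g \<subset> h" using srt p g unfolding sorted_wrt_iff_nth_less by blast
  qed
  define fT where "fT = sf A (clusters t)"
  have st: "elim_state A Sig t ord p = foldl fT (A, Sig) (take p ord)"
    unfolding elim_state_def
  proof (rule foldl_cong[OF refl refl])
    fix st h assume "h \<in> set (take p ord)"
    then have h: "h \<in> clusters t" using tk by blast
    have pe: "priv A t h = privF A (clusters t) h" by (rule priv_eq[OF wf h])
    have dj: "bnd A h \<inter> priv A t h = {}" using pe privF_sub[of A "clusters t" h] by blast
    show "elim_step A t st h = fT st h"
      using elim_step_stp[OF dj] unfolding fT_def sf_def pe by simp
  qed
  have ag1: "agree g (foldl fT (A, Sig) (take p ord)) (foldl fT (A, Sig) D)"
    unfolding D_def
  proof (rule foldl_filter_agree)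
    show "\<forall>h\<in>set (take p ord). h \<subseteq> g \<longrightarrow> (\<forall>s1 s2. agree g s1 s2 \<longrightarrow> agree g (fT s1 h) (fT s2 h))"
    proof (intro ballI impI allI)
      fix h s1 s2 assume "h \<subseteq> g" "agree g s1 s2"
      then show "agree g (fT s1 h) (fT s2 h)" unfolding fT_def sf_def
        using stp_loc bnd_sub privF_sub by (metis Diff_subset order_trans)
    qed
    show "\<forall>h\<in>set (take p ord). \<not> h \<subseteq> g \<longrightarrow> (\<forall>s. agree g (fT s h) s)"
    proof (intro ballI impI allI)
      fix h s assume h: "h \<in> set (take p ord)" and nh: "\<not> h \<subseteq> g"
      have "h \<in> clusters t" using h tk by blast
      then have "h \<subseteq> g \<or> g \<subseteq> h \<or> h \<inter> g = {}" using lam gin by blast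
      moreover have "\<not> g \<subset> h" using notsup h by blast
      moreover have "g \<noteq> h" using h gnot by blast
      ultimately have "h \<inter> g = {}" using nh by blast
      then have "bnd A h \<inter> g = {}" using bnd_sub by blast
      then show "agree g (fT s h) s" unfolding fT_def sf_def by (rule stp_disj)
    qed
    show "agree g (A, Sig) (A, Sig)" by (rule agree_refl)
  qed
  have eqf: "foldl fT (A, Sig) D = foldl (sf A F0) (A, Sig) D"
  proof (rule foldl_cong[OF refl refl])
    fix s h assume "h \<in> set D"
    then have "h \<subseteq> g" unfolding D_def by simp
    then have "clusters t \<inter> {h'. h' \<subset> h} = F0 \<inter> {h'. h' \<subset> h}" using F0 by auto
    then show "fT s h = sf A F0 s h" unfolding fT_def sf_def using privF_cong by metis
  qed
  have dD: "distinct D" unfolding D_def using di by simp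
  have sD: "set D = F0 - {g}"
  proof
    show "set D \<subseteq> F0 - {g}" unfolding D_def F0 using tk gnot by auto
    show "F0 - {g} \<subseteq> set D"
    proof
      fix h assume "h \<in> F0 - {g}"
      then have h: "h \<in> clusters t" "h \<subseteq> g" "h \<noteq> g" using F0 by auto
      then obtain j where j: "j < length ord" "ord ! j = h" using so by (metis in_set_conv_nth)
      have "j < p"
      proof (rule ccontr)
        assume "\<not> j < p"
        then consider "j = p" | "p < j" by linarith
        then show False
        proof cases
          case 1 then show False using j g h by simp
        next
          case 2 then have "\<not> h \<subset> g" using srt j p g unfolding sorted_wrt_iff_nth_less by blast
          then show False using h by blast
        qed
      qed
      then have "h \<in> set (take p ord)" using j by (metis in_set_conv_nth length_take min_less_iff_conj nth_take)
      then show "h \<in> set D" unfolding D_def using h by simp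
    qed
  qed
  have srD: "sorted_wrt (\<lambda>a b. \<not> b \<subset> a) D" unfolding D_def
    by (rule sorted_wrt_filter) (rule sorted_wrt_take[OF srt])
  show ?thesis using ag1 st eqf dD sD srD by simp
qed



theorem theorem4:
  fixes A Sig :: "complex ^'n ^'n" and T :: "'n ctree" and R Q :: "'n set"
    and ordR ordQ :: "'n set list"
  assumes "invertible A" and "struct_sym A" and "sigma_pattern A Sig"
    and "cluster_tree T" and "\<not> (\<exists>c. T = Leaf c)"
    and "Leaf R \<in> subtrees T" and "Leaf Q \<in> subtrees T"
    and "consistent_ordering (aug_tree R T) ordR"
    and "consistent_ordering (aug_tree Q T) ordQ"
    and "elim_welldef A Sig (aug_tree R T) ordR"
    and "elim_welldef A Sig (aug_tree Q T) ordQ"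
  shows "\<forall>p q. p < length ordR \<and> q < length ordQ \<and> ordR ! p = ordQ ! q \<longrightarrow>
     (let i = ordR ! p; K = priv A (aug_tree R T) i \<union> bnd A i in
      \<forall>a\<in>K. \<forall>b\<in>K. snd (elim_state A Sig (aug_tree R T) ordR p) $ a $ b
                   = snd (elim_state A Sig (aug_tree Q T) ordQ q) $ a $ b)"
proof (intro allI impI)
  fix p q assume pq: "p < length ordR \<and> q < length ordQ \<and> ordR ! p = ordQ ! q"
  define g where "g = ordR ! p"
  define tR where "tR = aug_tree R T"
  define tQ where "tQ = aug_tree Q T"
  define CT where "CT = clusters T"
  have wT: "wf_ctree T" using assms(4) by (simp add: cluster_tree_def)
  have AR: "wf_ctree tR \<and> clusters tR = fam CT R" unfolding tR_def CT_def
    by (rule aug_tree_props[OF assms(4,5,6)])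
  have AQ: "wf_ctree tQ \<and> clusters tQ = fam CT Q" unfolding tQ_def CT_def
    by (rule aug_tree_props[OF assms(4,5,7)])
  have lamCT: "\<forall>x\<in>CT. \<forall>y\<in>CT. x \<subseteq> y \<or> y \<subseteq> x \<or> x \<inter> y = {}"
    using laminar[OF wT] unfolding CT_def clusters_def by blast
  have Rne: "R \<noteq> {}" using cl_ne wf_sub wT assms(6) by fastforce
  have Qne: "Q \<noteq> {}" using cl_ne wf_sub wT assms(7) by fastforce
  have coR: "consistent_ordering tR ordR" and coQ: "consistent_ordering tQ ordQ"
    using assms(8,9) unfolding tR_def tQ_def by auto
  have gR: "g \<in> clusters tR" using coR pq nth_mem unfolding g_def consistent_ordering_def by blast
  have gQ: "g \<in> clusters tQ" using coQ pq nth_mem unfolding g_def consistent_ordering_def by metis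
  have below: "clusters tR \<inter> Pow g = clusters tQ \<inter> Pow g"
    using family_below[OF lamCT Rne Qne] gR gQ AR AQ by simp
  define F0 where "F0 = clusters tR \<inter> Pow g"
  define DR where "DR = filter (\<lambda>h. h \<subseteq> g) (take p ordR)"
  define DQ where "DQ = filter (\<lambda>h. h \<subseteq> g) (take q ordQ)"
  have sR: "agree g (elim_state A Sig tR ordR p) (foldl (sf A F0) (A, Sig) DR)
    \<and> distinct DR \<and> set DR = F0 - {g} \<and> sorted_wrt (\<lambda>a b. \<not> b \<subset> a) DR"
    unfolding DR_def by (rule side) (use AR coR pq g_def F0_def in auto)
  have sQ: "agree g (elim_state A Sig tQ ordQ q) (foldl (sf A F0) (A, Sig) DQ)
    \<and> distinct DQ \<and> set DQ = F0 - {g} \<and> sorted_wrt (\<lambda>a b. \<not> b \<subset> a) DQ"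
    unfolding DQ_def by (rule side) (use AQ coQ pq g_def F0_def below in auto)
  have lamR: "\<forall>x\<in>clusters tR. \<forall>y\<in>clusters tR. x \<subseteq> y \<or> y \<subseteq> x \<or> x \<inter> y = {}"
    using laminar AR unfolding clusters_def by blast
  have eqD: "foldl (sf A F0) (A, Sig) DR = foldl (sf A F0) (A, Sig) DQ"
  proof (rule foldl_perm)
    show "distinct DR" "distinct DQ" "set DR = set DQ"
      "sorted_wrt (\<lambda>a b. \<not> b \<subset> a) DR" "sorted_wrt (\<lambda>a b. \<not> b \<subset> a) DQ"
      using sR sQ by auto
    show "\<forall>x\<in>set DR. \<forall>y\<in>set DR. x \<subseteq> y \<or> y \<subseteq> x \<or> x \<inter> y = {}"
      using lamR sR unfolding F0_def by blast
    show "\<forall>x\<in>set DR. \<forall>y\<in>set DR. x \<inter> y = {} \<longrightarrow> (\<forall>s. sf A F0 (sf A F0 s x) y = sf A F0 (sf A F0 s y) x)"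
    proof (intro ballI impI allI)
      fix x y :: "'n set" and s assume "x \<inter> y = {}"
      moreover have "bnd A x \<subseteq> x" "bnd A y \<subseteq> y" "privF A F0 x \<subseteq> x" "privF A F0 y \<subseteq> y"
        using bnd_sub privF_sub by blast+
      ultimately have "bnd A y \<inter> (bnd A x \<union> privF A F0 x) = {}" "bnd A x \<inter> (bnd A y \<union> privF A F0 y) = {}"
        by blast+
      then show "sf A F0 (sf A F0 s x) y = sf A F0 (sf A F0 s y) x"
        unfolding sf_def by (rule stp_comm)
    qed
  qed
  have ag: "agree g (elim_state A Sig tR ordR p) (elim_state A Sig tQ ordQ q)"
    using sR sQ eqD agree_trans agree_sym by metis
  have Kg: "priv A tR g \<union> bnd A g \<subseteq> g"
    using priv_eq[OF _ gR] AR privF_sub bnd_sub by blast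
  show "let i = ordR ! p; K = priv A (aug_tree R T) i \<union> bnd A i in
      \<forall>a\<in>K. \<forall>b\<in>K. snd (elim_state A Sig (aug_tree R T) ordR p) $ a $ b
                   = snd (elim_state A Sig (aug_tree Q T) ordQ q) $ a $ b"
    unfolding Let_def g_def[symmetric] tR_def[symmetric] tQ_def[symmetric]
    using ag Kg unfolding agree_def by blast
qed

end
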